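(* Let $P_1$ be the uniform distribution on $[0,\frac12]$, let $P_2$ be the uniform distribution on $[\frac34,1]$, and let $P=\frac34P_1+\frac14P_2$. Then the set $\{\frac18,\frac38,\frac78\}$ forms an optimal set of three-means for $P$, with quantization error $V_3=\frac1{192}$.
   Context: For a finite set $\alpha\subset\mathbb R$, $V(P;\alpha)=\int\min_{a\in\alpha}(x-a)^2\,dP(x)$; $V_n=\inf\{V(P;\alpha):\mathrm{card}(\alpha)\le n\}$; an optimal set of $n$-means is a set $\alpha$ with $\mathrm{card}(\alpha)\le n$ and $V(P;\alpha)=V_n$. *)

theory Defs
  imports "HOL-Probability.Probability"
begin

text \<open>Distortion V(P;alpha) = integral of min_{a in alpha} (x-a)^2 dP(x),
  taken as a nonnegative (extended) integral so it is always defined.\<close>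
definition distortion :: "real measure \<Rightarrow> real set \<Rightarrow> ennreal" where
  "distortion P \<alpha> = (\<integral>\<^sup>+ x. ennreal (Min ((\<lambda>a. (x - a)\<^sup>2) ` \<alpha>)) \<partial>P)"

definition quant_error :: "real measure \<Rightarrow> nat \<Rightarrow> ennreal" where
  "quant_error P n = (INF \<alpha> \<in> {\<alpha>. finite \<alpha> \<and> \<alpha> \<noteq> {} \<and> card \<alpha> \<le> n}. distortion P \<alpha>)"

definition optimal_n_means :: "real measure \<Rightarrow> nat \<Rightarrow> real set \<Rightarrow> bool" where
  "optimal_n_means P n \<alpha> \<longleftrightarrow> finite \<alpha> \<and> \<alpha> \<noteq> {} \<and> card \<alpha> \<le> n \<and>
     distortion P \<alpha> = quant_error P n"

definition P1 :: "real measure" where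
  "P1 = uniform_measure lborel {0..1/2}"

definition P2 :: "real measure" where
  "P2 = uniform_measure lborel {3/4..1}"

definition Pmix :: "real measure" where
  "Pmix = measure_of UNIV (sets borel)
      (\<lambda>A. ennreal (3/4) * emeasure P1 A + ennreal (1/4) * emeasure P2 A)"

end

theory Submission
  imports Defs "HOL-Probability.Probability"
begin

definition fdens :: "real \<Rightarrow> ennreal" where
  "fdens x = ennreal (3/2) * indicator {0..1/2} x + indicator {3/4..1} x"

lemma fdens_meas[measurable]: "fdens \<in> borel_measurable borel"
  unfolding fdens_def by measurable

lemma Pmix_density: "Pmix = density lborel fdens"
proof -
  have "density lborel fdens = measure_of UNIV (sets borel) (emeasure (density lborel fdens))"
    using measure_of_of_measure[of "density lborel fdens"] by simp
  also have "\<dots> = Pmix"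
    unfolding Pmix_def
  proof (rule measure_of_eq)
    show "sets borel \<subseteq> Pow UNIV" by simp
    fix A assume "A \<in> sigma_sets UNIV (sets (borel::real measure))"
    then have A[measurable]: "A \<in> sets borel"
      by (metis sets.sets_measure_of_eq sets_measure_of space_borel sets.space_closed)
    have e1: "emeasure P1 A = ennreal 2 * emeasure lborel ({0..1/2} \<inter> A)"
    proof -
      have h: "inverse (ennreal (1/2)) = ennreal 2" by (subst inverse_ennreal) auto
      have "emeasure P1 A = emeasure lborel ({0..1/2} \<inter> A) / emeasure lborel {0..1/2::real}"
        unfolding P1_def by (subst emeasure_uniform_measure) auto
      also have "emeasure lborel {0..1/2::real} = ennreal (1/2)" by (subst emeasure_lborel_Icc) auto
      finally show ?thesis by (simp only: divide_ennreal_def h mult.commute)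
    qed
    show "emeasure (density lborel fdens) A =
      ennreal (3/4) * emeasure P1 A + ennreal (1/4) * emeasure P2 A"
    proof -
      have e2: "emeasure P2 A = ennreal 4 * emeasure lborel ({3/4..1} \<inter> A)"
      proof -
      have h: "inverse (ennreal (1/4)) = ennreal 4" by (subst inverse_ennreal) auto
      have "emeasure P2 A = emeasure lborel ({3/4..1} \<inter> A) / emeasure lborel {3/4..1::real}"
        unfolding P2_def by (subst emeasure_uniform_measure) auto
      also have "emeasure lborel {3/4..1::real} = ennreal (1/4)" by (subst emeasure_lborel_Icc) auto
      finally show ?thesis by (simp only: divide_ennreal_def h mult.commute)
    qed
      have "emeasure (density lborel fdens) A = (\<integral>\<^sup>+ x. ennreal (3/2) * indicator ({0..1/2} \<inter> A) x + indicator ({3/4..1} \<inter> A) x \<partial>lborel)"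
        by (subst emeasure_density) (auto simp: fdens_def intro!: nn_integral_cong split: split_indicator)
      also have "\<dots> = ennreal (3/2) * emeasure lborel ({0..1/2} \<inter> A) + emeasure lborel ({3/4..1} \<inter> A)"
        by (subst nn_integral_add) (auto simp: nn_integral_cmult_indicator)
      also have "\<dots> = ennreal (3/4) * emeasure P1 A + ennreal (1/4) * emeasure P2 A"
      proof -
        have c1: "ennreal (3/4) * ennreal 2 = ennreal (3/2)" by (subst ennreal_mult[symmetric]) auto
        have c2: "ennreal (1/4) * ennreal 4 = 1" by (subst ennreal_mult[symmetric]) auto
        show ?thesis by (simp only: e1 e2 mult.assoc[symmetric] c1 c2 mult_1)
      qed
      finally show ?thesis .
    qed
  qed
  finally show ?thesis by simp
qed
definition J :: "real \<Rightarrow> real \<Rightarrow> real \<Rightarrow> real" where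
  "J u v a = ((v-a)^3 - (u-a)^3)/3"

definition gmin :: "real \<Rightarrow> real \<Rightarrow> real \<Rightarrow> real \<Rightarrow> real" where
  "gmin a1 a2 a3 x = min ((x-a1)^2) (min ((x-a2)^2) ((x-a3)^2))"

definition cl :: "real \<Rightarrow> real" where "cl x = max 0 (min (1/2) x)"
definition cr :: "real \<Rightarrow> real" where "cr x = max (3/4) (min 1 x)"

definition Phi :: "real \<Rightarrow> real \<Rightarrow> real \<Rightarrow> real" where
  "Phi a1 a2 a3 = (let m1 = (a1+a2)/2; m2 = (a2+a3)/2 in
     3/2 * (J 0 (cl m1) a1 + J (cl m1) (cl m2) a2 + J (cl m2) (1/2) a3)
     + (J (3/4) (cr m1) a1 + J (cr m1) (cr m2) a2 + J (cr m2) 1 a3))"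

lemma J_int:
  assumes "u \<le> v" "\<And>x. u < x \<Longrightarrow> x < v \<Longrightarrow> g x = (x-a)^2"
  shows "(g has_integral J u v a) {u..v}"
proof -
  have "((\<lambda>x. (x-a)^2) has_integral ((v-a)^3/3 - (u-a)^3/3)) {u..v}"
  proof (rule fundamental_theorem_of_calculus[OF assms(1)])
    fix x :: real
    show "((\<lambda>x. (x-a)^3/3) has_vector_derivative (x-a)^2) (at x within {u..v})"
      unfolding has_real_derivative_iff_has_vector_derivative[symmetric]
      by (auto intro!: derivative_eq_intros simp: power2_eq_square)
  qed
  then have "((\<lambda>x. (x-a)^2) has_integral J u v a) {u..v}"
    by (simp add: J_def diff_divide_distrib)
  moreover have "g x = (x-a)^2" if "x \<in> {u..v} - {u,v}" for x
    using that assms(2)[of x] by auto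
  ultimately show ?thesis
    using has_integral_spike_finite[of "{u,v}" "{u..v}" g "\<lambda>x. (x-a)^2"] by blast
qed

lemma gmin1: "a1 \<le> a2 \<Longrightarrow> a2 \<le> a3 \<Longrightarrow> x \<le> (a1+a2)/2 \<Longrightarrow> gmin a1 a2 a3 x = (x-a1)^2"
proof -
  assume h: "a1 \<le> a2" "a2 \<le> a3" "x \<le> (a1+a2)/2"
  have "(x-a2)^2 - (x-a1)^2 = (a2-a1)*(a1+a2-2*x)" by (simp add: power2_eq_square algebra_simps)
  moreover have "(x-a3)^2 - (x-a1)^2 = (a3-a1)*(a1+a3-2*x)" by (simp add: power2_eq_square algebra_simps)
  moreover have "(a2-a1)*(a1+a2-2*x) \<ge> 0" using h by simp
  moreover have "(a3-a1)*(a1+a3-2*x) \<ge> 0" using h by simp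
  ultimately show ?thesis unfolding gmin_def by linarith
qed

lemma gmin2: "a1 \<le> a2 \<Longrightarrow> a2 \<le> a3 \<Longrightarrow> (a1+a2)/2 \<le> x \<Longrightarrow> x \<le> (a2+a3)/2 \<Longrightarrow> gmin a1 a2 a3 x = (x-a2)^2"
proof -
  assume h: "a1 \<le> a2" "a2 \<le> a3" "(a1+a2)/2 \<le> x" "x \<le> (a2+a3)/2"
  have "(x-a1)^2 - (x-a2)^2 = (a2-a1)*(2*x-a1-a2)" by (simp add: power2_eq_square algebra_simps)
  moreover have "(x-a3)^2 - (x-a2)^2 = (a3-a2)*(a2+a3-2*x)" by (simp add: power2_eq_square algebra_simps)
  moreover have "(a2-a1)*(2*x-a1-a2) \<ge> 0" using h by simp
  moreover have "(a3-a2)*(a2+a3-2*x) \<ge> 0" using h by simp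
  ultimately show ?thesis unfolding gmin_def by linarith
qed

lemma gmin3: "a1 \<le> a2 \<Longrightarrow> a2 \<le> a3 \<Longrightarrow> (a2+a3)/2 \<le> x \<Longrightarrow> gmin a1 a2 a3 x = (x-a3)^2"
proof -
  assume h: "a1 \<le> a2" "a2 \<le> a3" "(a2+a3)/2 \<le> x"
  have "(x-a1)^2 - (x-a3)^2 = (a3-a1)*(2*x-a1-a3)" by (simp add: power2_eq_square algebra_simps)
  moreover have "(x-a2)^2 - (x-a3)^2 = (a3-a2)*(2*x-a2-a3)" by (simp add: power2_eq_square algebra_simps)
  moreover have "(a3-a1)*(2*x-a1-a3) \<ge> 0" using h by simp
  moreover have "(a3-a2)*(2*x-a2-a3) \<ge> 0" using h by simp
  ultimately show ?thesis unfolding gmin_def by linarith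
qed

lemma clamp1: "lo < x \<Longrightarrow> x < max lo (min hi m) \<Longrightarrow> x \<le> (m::real)"
  by (simp add: max_def min_def split: if_splits)
lemma clamp2: "max lo (min hi m) < x \<Longrightarrow> x < hi \<Longrightarrow> (m::real) \<le> x"
  by (simp add: max_def min_def split: if_splits)
lemma clamp_mono: "lo \<le> hi \<Longrightarrow> m \<le> m' \<Longrightarrow> max lo (min hi m) \<le> max lo (min hi (m'::real))"
  by (simp add: max_def min_def)
lemma clamp_bd: "lo \<le> hi \<Longrightarrow> lo \<le> max lo (min hi m) \<and> max lo (min hi (m::real)) \<le> hi"
  by (simp add: max_def min_def)

lemma int3:
  assumes s: "a1 \<le> a2" "a2 \<le> a3" and lh: "lo \<le> hi"
    and c1: "c1 = max lo (min hi ((a1+a2)/2))" and c2: "c2 = max lo (min hi ((a2+a3)/2))"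
  shows "(gmin a1 a2 a3 has_integral (J lo c1 a1 + J c1 c2 a2 + J c2 hi a3)) {lo..hi}"
proof -
  have m: "(a1+a2)/2 \<le> (a2+a3)/2" using s by simp
  have o: "lo \<le> c1" "c1 \<le> c2" "c2 \<le> hi" using clamp_bd[OF lh] clamp_mono[OF lh m] unfolding c1 c2 by auto
  have i1: "(gmin a1 a2 a3 has_integral J lo c1 a1) {lo..c1}"
    by (rule J_int[OF o(1)], rule gmin1[OF s], rule clamp1, assumption, simp add: c1)
  have i2: "(gmin a1 a2 a3 has_integral J c1 c2 a2) {c1..c2}"
  proof (rule J_int[OF o(2)], rule gmin2[OF s])
    fix x assume x: "c1 < x" "x < c2"
    show "(a1+a2)/2 \<le> x" by (rule clamp2[of lo hi]) (use x o c1 in auto)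
    show "x \<le> (a2+a3)/2" by (rule clamp1[of lo _ hi]) (use x o c2 in auto)
  qed
  have i3: "(gmin a1 a2 a3 has_integral J c2 hi a3) {c2..hi}"
    by (rule J_int[OF o(3)], rule gmin3[OF s], rule clamp2[of lo hi], simp add: c2, assumption)
  have i12: "(gmin a1 a2 a3 has_integral (J lo c1 a1 + J c1 c2 a2)) {lo..c2}"
    by (rule has_integral_combine[OF o(1) o(2) i1 i2])
  have lc2: "lo \<le> c2" using o by linarith
  show ?thesis
    by (rule has_integral_combine[OF lc2 o(3) i12 i3])
qed

lemma gmin_nonneg: "0 \<le> gmin a1 a2 a3 x" by (simp add: gmin_def)

lemma gmin_meas[measurable]: "gmin a1 a2 a3 \<in> borel_measurable borel"
  unfolding gmin_def by measurable

lemma distortion_eq: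
  assumes s: "a1 \<le> a2" "a2 \<le> a3"
  shows "distortion Pmix {a1,a2,a3} = ennreal (Phi a1 a2 a3)"
proof -
  define g where "g = gmin a1 a2 a3"
  define m1 where "m1 = (a1+a2)/2"
  define m2 where "m2 = (a2+a3)/2"
  have L: "(g has_integral (J 0 (cl m1) a1 + J (cl m1) (cl m2) a2 + J (cl m2) (1/2) a3)) {0..1/2}"
    unfolding g_def by (rule int3[OF s]) (simp_all add: cl_def m1_def m2_def)
  have R: "(g has_integral (J (3/4) (cr m1) a1 + J (cr m1) (cr m2) a2 + J (cr m2) 1 a3)) {3/4..1}"
    unfolding g_def by (rule int3[OF s]) (simp_all add: cr_def m1_def m2_def)
  define h where "h x = 3/2 * (if x \<in> {0..1/2} then g x else 0) + (if x \<in> {3/4..1} then g x else 0)" for x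
  have H: "(h has_integral Phi a1 a2 a3) UNIV"
  proof -
    have "((\<lambda>x. 3/2 * (if x \<in> {0..1/2} then g x else 0)) has_integral
        3/2 * (J 0 (cl m1) a1 + J (cl m1) (cl m2) a2 + J (cl m2) (1/2) a3)) UNIV"
      by (rule has_integral_mult_right) (simp only: has_integral_restrict_UNIV L)
    moreover have "((\<lambda>x. (if x \<in> {3/4..1} then g x else 0)) has_integral
        (J (3/4) (cr m1) a1 + J (cr m1) (cr m2) a2 + J (cr m2) 1 a3)) UNIV"
      by (simp only: has_integral_restrict_UNIV R)
    ultimately show ?thesis
      unfolding h_def Phi_def Let_def m1_def[symmetric] m2_def[symmetric]
      by (rule has_integral_add)
  qed
  have hnn: "0 \<le> h x" for x unfolding h_def g_def using gmin_nonneg[of a1 a2 a3 x] by auto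
  have I: "(\<integral>\<^sup>+x. ennreal (h x) \<partial>lborel) = ennreal (Phi a1 a2 a3)"
    using nn_integral_has_integral_lebesgue[of UNIV h, OF _ H] hnn by simp
  have Mn: "Min ((\<lambda>a. (x - a)\<^sup>2) ` {a1,a2,a3}) = g x" for x
    by (simp add: g_def gmin_def)
  have "distortion Pmix {a1,a2,a3} = (\<integral>\<^sup>+ x. ennreal (g x) \<partial>density lborel fdens)"
    unfolding distortion_def Mn Pmix_density ..
  also have "\<dots> = (\<integral>\<^sup>+ x. fdens x * ennreal (g x) \<partial>lborel)"
    by (rule nn_integral_density) (simp_all add: g_def)
  also have "\<dots> = (\<integral>\<^sup>+x. ennreal (h x) \<partial>lborel)"
  proof (rule nn_integral_cong)
    fix x
    have gn: "0 \<le> g x" unfolding g_def by (rule gmin_nonneg)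
    show "fdens x * ennreal (g x) = ennreal (h x)"
      unfolding fdens_def h_def using gn
      by (auto simp: indicator_def ennreal_mult[symmetric] distrib_right)
  qed
  finally show ?thesis using I by simp
qed

lemma J_exp: "J u v a = (v-u)^3/12 + (v-u)*(a-(u+v)/2)^2"
  unfolding J_def by (simp add: power3_eq_cube power2_eq_square field_simps)

lemma J_ge: "u \<le> v \<Longrightarrow> (v-u)^3/12 \<le> J u v a"
  unfolding J_exp by simp

lemma J_nn: "u \<le> v \<Longrightarrow> 0 \<le> J u v a"
proof -
  assume "u \<le> v"
  then have "0 \<le> (v-u)^3" by simp
  then show ?thesis using J_ge[OF \<open>u \<le> v\<close>, of a] by linarith
qed

lemma J_0: "J u u a = 0" by (simp add: J_def)

lemma cube2: "0 \<le> p \<Longrightarrow> 0 \<le> q \<Longrightarrow> (p+q)^3/4 \<le> p^3+(q::real)^3"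
proof -
  assume "0 \<le> p" "0 \<le> q"
  then have "0 \<le> 3*(p+q)*(p-q)^2" by simp
  moreover have "4*(p^3+q^3) - (p+q)^3 = 3*(p+q)*(p-q)^2"
    by (simp add: power3_eq_cube power2_eq_square algebra_simps)
  ultimately have "(p+q)^3 \<le> 4*(p^3+q^3)" by linarith
  then show ?thesis by simp
qed

lemma wsum: "(A+B)*(A*X^2+B*Y^2) = A*B*(X-Y)^2 + (A*X+B*(Y::real))^2"
  by (simp add: power2_eq_square algebra_simps)

lemma wsum_ge:
  fixes A B X Y :: real
  assumes "0 \<le> A" "0 \<le> B" "0 \<le> D" "D \<le> X - Y"
  shows "A*B*D^2 \<le> (A+B)*(A*X^2+B*Y^2)"
proof -
  have "D^2 \<le> (X-Y)^2" using assms by (intro power_mono) auto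
  then have "A*B*D^2 \<le> A*B*(X-Y)^2" using assms by (intro mult_left_mono) auto
  then show ?thesis unfolding wsum using zero_le_power2[of "A*X+B*Y"] by linarith
qed

lemma spanB:
  assumes l: "0 \<le> l" "l \<le> 1/2"
  shows "l^3/8 + 1/768 + 3*l/128 \<le> 3/2 * J (1/2-l) (1/2) a + J (3/4) 1 a"
proof -
  define K where "K = (3*l/2)*(a-(1/2-l/2))^2 + (1/4)*(a-7/8)^2"
  have e: "3/2 * J (1/2-l) (1/2) a + J (3/4) 1 a = l^3/8 + 1/768 + K"
    unfolding J_exp K_def by (simp add: power3_eq_cube power2_eq_square field_simps)
  have w: "(3*l/2)*(1/4)*(3/8)^2 \<le> (3*l/2+1/4)*K"
    unfolding K_def by (rule wsum_ge) (use l in auto)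
  have "0 \<le> l * (3/64 - 9*l/256)" using l by (intro mult_nonneg_nonneg) auto
  then have "(3*l/2+1/4)*(3*l/128) \<le> (3*l/2)*(1/4)*(3/8)^2"
    by (simp add: power2_eq_square algebra_simps)
  with w have "(3*l/2+1/4)*(3*l/128) \<le> (3*l/2+1/4)*K" by linarith
  then have "3*l/128 \<le> K"
    using l by (subst (asm) mult_le_cancel_left_pos) auto
  then show ?thesis unfolding e by linarith
qed

lemma spanD:
  assumes s: "0 \<le> s" "s \<le> 1/2" and t: "0 \<le> t" "t \<le> 1/4"
  shows "s^3/8 + t^3/12 + (t/64 - (3/16)*(s-1/4)^2) \<le> 3/2 * J (1/2-s) (1/2) a + J (3/4) (3/4+t) a"
proof -
  define K where "K = (3* s/2)*(a-(1/2-s/2))^2 + t*(a-(3/4+t/2))^2"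
  have e: "3/2 * J (1/2-s) (1/2) a + J (3/4) (3/4+t) a = s^3/8 + t^3/12 + K"
    unfolding J_exp K_def by (simp add: power3_eq_cube power2_eq_square field_simps)
  have K0: "0 \<le> K" unfolding K_def using s t by simp
  have "t/64 - (3/16)*(s-1/4)^2 \<le> K"
  proof (cases "2*t \<le> 9* s")
    case True
    have w: "(3* s/2)*t*(1/4)^2 \<le> (3* s/2+t)*K"
      unfolding K_def by (rule wsum_ge) (use s t in auto)
    have "0 \<le> t * (9* s/2 - t)" using True t by (intro mult_nonneg_nonneg) auto
    then have "(3* s/2+t)*(t/64) \<le> (3* s/2)*t*(1/4)^2"
      by (simp add: power2_eq_square algebra_simps)
    with w have w2: "(3* s/2+t)*(t/64) \<le> (3* s/2+t)*K" by linarith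
    show ?thesis
    proof (cases "3* s/2+t = 0")
      case True then have "t = 0" using s t by linarith
      moreover have "0 \<le> (s-1/4)^2" by simp
      ultimately show ?thesis using K0 by linarith
    next
      case False
      then have "0 < 3* s/2+t" using s t by linarith
      then have "t/64 \<le> K" using w2 by (subst (asm) mult_le_cancel_left_pos) auto
      moreover have "0 \<le> (s-1/4)^2" by simp
      ultimately show ?thesis by linarith
    qed
  next
    case False
    then have "7/36 \<le> 1/4 - s" using t by linarith
    then have "(7/36)^2 \<le> (1/4-s)^2" by (intro power_mono) auto
    moreover have "(s-1/4)^2 = (1/4-s)^2" by (simp add: power2_eq_square algebra_simps)
    ultimately have "(3/16)*(7/36)^2 \<le> (3/16)*(s-1/4)^2" by simp
    then show ?thesis using t K0 by (simp add: power2_eq_square)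
  qed
  then show ?thesis unfolding e by linarith
qed

lemma Phi_val: "Phi (1/8) (3/8) (7/8) = 1/192"
  by (simp add: Phi_def cl_def cr_def J_def power3_eq_cube)

lemma Phi_lb:
  assumes s: "a1 \<le> a2" "a2 \<le> a3"
  shows "1/192 \<le> Phi a1 a2 a3"
proof -
  define m1 where "m1 = (a1+a2)/2"
  define m2 where "m2 = (a2+a3)/2"
  have mm: "m1 \<le> m2" using s unfolding m1_def m2_def by simp
  have P: "Phi a1 a2 a3 = 3/2 * (J 0 (cl m1) a1 + J (cl m1) (cl m2) a2 + J (cl m2) (1/2) a3)
     + (J (3/4) (cr m1) a1 + J (cr m1) (cr m2) a2 + J (cr m2) 1 a3)"
    unfolding Phi_def Let_def m1_def m2_def ..
  have b: "0 \<le> cl m1" "cl m1 \<le> cl m2" "cl m2 \<le> 1/2" "3/4 \<le> cr m1" "cr m1 \<le> cr m2" "cr m2 \<le> 1"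
    using mm unfolding cl_def cr_def by (simp_all add: max_def min_def)
  have nn: "0 \<le> J 0 (cl m1) a1" "0 \<le> J (cl m1) (cl m2) a2" "0 \<le> J (cl m2) (1/2) a3"
     "0 \<le> J (3/4) (cr m1) a1" "0 \<le> J (cr m1) (cr m2) a2" "0 \<le> J (cr m2) 1 a3"
    using b by (auto intro!: J_nn)
  show ?thesis
  proof (cases "1/2 \<le> m1")
    case True
    then have c: "cl m1 = 1/2" unfolding cl_def by simp
    have "1/96 \<le> J 0 (cl m1) a1" using J_ge[of 0 "cl m1" a1] b unfolding c by (simp add: power3_eq_cube)
    then show ?thesis unfolding P using nn by (simp add: algebra_simps)
  next
    case m1: False
    then have c1: "cr m1 = 3/4" unfolding cr_def by simp
    define x where "x = cl m1"
    have x: "0 \<le> x" "x \<le> 1/2" using b unfolding x_def by auto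
    have Jx: "x^3/12 \<le> J 0 x a1" using J_ge[of 0 x a1] x by simp
    show ?thesis
    proof (cases "m2 \<le> 1/2")
      case True
      then have c2: "cr m2 = 3/4" unfolding cr_def by simp
      define y where "y = cl m2"
      have y: "x \<le> y" "y \<le> 1/2" using b unfolding x_def y_def by auto
      have Jxy: "(y-x)^3/12 \<le> J x y a2" using J_ge[of x y a2] y by simp
      have cb: "y^3/4 \<le> x^3 + (y-x)^3" using cube2[of x "y-x"] x y by simp
      have yy: "0 \<le> (y-1/2)^2*(y+1)" using x y by simp
      have yid: "(y-1/2)^2*(y+1) = y^3 - 3*y/4 + 1/4" by (simp add: power2_eq_square power3_eq_cube algebra_simps)
      define l where "l = 1/2 - y"
      have ly: "1/2 - l = y" unfolding l_def by simp
      have sp: "l^3/8 + 1/768 + 3*l/128 \<le> 3/2 * J y (1/2) a3 + J (3/4) 1 a3"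
        using spanB[of l a3] y x unfolding ly l_def by simp
      have l3: "0 \<le> l^3" using y unfolding l_def by simp
      have P2: "Phi a1 a2 a3 = 3/2 * (J 0 x a1 + J x y a2 + J y (1/2) a3) + J (3/4) 1 a3"
        unfolding P c1 c2 x_def[symmetric] y_def[symmetric] J_0 by simp
      have q1: "y^3/32 \<le> 3/2*J 0 x a1 + 3/2*J x y a2" using Jx Jxy cb unfolding distrib_left by linarith
      have q2: "3*y/4 - 1/4 \<le> y^3" using yy yid by linarith
      have yl: "y = 1/2 - l" unfolding l_def by simp
      show ?thesis unfolding P2 distrib_left using q1 q2 sp l3 yl by linarith
    next
      case m2: False
      then have c2: "cl m2 = 1/2" unfolding cl_def by simp
      have Jx2: "(1/2-x)^3/12 \<le> J x (1/2) a2" using J_ge[of x "1/2" a2] x by simp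
      have cb: "(1/2)^3/4 \<le> x^3 + (1/2-x)^3" using cube2[of x "1/2-x"] x by simp
      show ?thesis
      proof (cases "m2 \<le> 3/4")
        case True
        then have c3: "cr m2 = 3/4" unfolding cr_def by simp
        have h8: "(1/2::real)^3 = 1/8" and h64: "(1/4::real)^3 = 1/64" by (simp_all add: power3_eq_cube)
        have J3: "(1/4)^3/12 \<le> J (3/4) 1 a3" using J_ge[of "3/4" 1 a3] by simp
        have P2: "Phi a1 a2 a3 = 3/2 * (J 0 x a1 + J x (1/2) a2) + J (3/4) 1 a3"
          unfolding P c1 c2 c3 x_def[symmetric] J_0 by simp
        show ?thesis unfolding P2 distrib_left using Jx Jx2 cb J3 h8 h64 by linarith
      next
        case False
        define z where "z = cr m2"
        have z: "3/4 \<le> z" "z \<le> 1" using b unfolding z_def by auto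
        have P2: "Phi a1 a2 a3 = 3/2 * (J 0 x a1 + J x (1/2) a2) + (J (3/4) z a2 + J z 1 a3)"
          unfolding P c1 c2 x_def[symmetric] z_def[symmetric] J_0 by simp
        have Jz: "(1-z)^3/12 \<le> J z 1 a3" using J_ge[of z 1 a3] z by simp
        have sp: "(1/2-x)^3/8 + (z-3/4)^3/12 + ((z-3/4)/64 - (3/16)*((1/2-x)-1/4)^2)
            \<le> 3/2 * J x (1/2) a2 + J (3/4) z a2"
          using spanD[of "1/2-x" "z-3/4" a2] x z by simp
        have i1: "x^3 + (1/2-x)^3 = 1/32 + (3/2)*((1/2-x)-1/4)^2"
          by (simp add: power2_eq_square power3_eq_cube algebra_simps)
        have i2: "(z-3/4)^3 + (1-z)^3 = 1/64 - 3*(z-3/4)/16 + 3*(z-3/4)^2/4"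
          by (simp add: power2_eq_square power3_eq_cube field_simps)
        have t2: "0 \<le> (z-3/4)^2" by simp
        show ?thesis unfolding P2 distrib_left using Jx Jz sp i1 i2 t2 by linarith
      qed
    qed
  qed
qed


lemma set3:
  fixes \<alpha> :: "real set"
  assumes "finite \<alpha>" "\<alpha> \<noteq> {}" "card \<alpha> \<le> 3"
  shows "\<exists>a1 a2 a3. a1 \<le> a2 \<and> a2 \<le> a3 \<and> \<alpha> = {a1,a2,a3}"
proof -
  define xs where "xs = sorted_list_of_set \<alpha>"
  have st: "set xs = \<alpha>" "sorted xs" "length xs = card \<alpha>"
    using assms unfolding xs_def by auto
  show ?thesis
  proof (cases xs)
    case Nil then show ?thesis using st assms by auto
  next
    case (Cons a r)
    show ?thesis
    proof (cases r)
      case Nil then show ?thesis using st Cons by (intro exI[of _ a]) auto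
    next
      case (Cons b r2)
      show ?thesis
      proof (cases r2)
        case Nil then show ?thesis using st \<open>xs = a # r\<close> Cons
          by (intro exI[of _ a] exI[of _ b] exI[of _ b]) auto
      next
        case (Cons c r3)
        have "length xs \<le> 3" using st(3) assms(3) by simp
        then have "r3 = []" using \<open>xs = a # r\<close> \<open>r = b # r2\<close> Cons by simp
        then show ?thesis using st \<open>xs = a # r\<close> \<open>r = b # r2\<close> Cons
          by (intro exI[of _ a] exI[of _ b] exI[of _ c]) auto
      qed
    qed
  qed
qed

lemma distortion_lb:
  fixes \<alpha> :: "real set"
  assumes "finite \<alpha>" "\<alpha> \<noteq> {}" "card \<alpha> \<le> 3"
  shows "ennreal (1/192) \<le> distortion Pmix \<alpha>"
proof -
  obtain a1 a2 a3 where s: "a1 \<le> a2" "a2 \<le> a3" and e: "\<alpha> = {a1,a2,a3}"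
    using set3[OF assms] by blast
  show ?thesis unfolding e distortion_eq[OF s] using Phi_lb[OF s] by (simp add: ennreal_leI)
qed

lemma dist0: "distortion Pmix {1/8, 3/8, 7/8} = ennreal (1/192)"
  using distortion_eq[of "1/8" "3/8" "7/8"] Phi_val by simp

theorem lemma3p4:
  shows "optimal_n_means Pmix 3 {1/8, 3/8, 7/8} \<and> quant_error Pmix 3 = ennreal (1/192)"
proof -
  have mem: "{1/8, 3/8, 7/8::real} \<in> {\<alpha>. finite \<alpha> \<and> \<alpha> \<noteq> {} \<and> card \<alpha> \<le> 3}" by simp
  have q: "quant_error Pmix 3 = ennreal (1/192)"
  proof (rule antisym)
    show "quant_error Pmix 3 \<le> ennreal (1/192)"
      unfolding quant_error_def using INF_lower[OF mem, of "distortion Pmix"] dist0 by simp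
    show "ennreal (1/192) \<le> quant_error Pmix 3"
      unfolding quant_error_def by (rule INF_greatest) (use distortion_lb in auto)
  qed
  show ?thesis unfolding optimal_n_means_def q dist0 by simp
qed

end
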